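(* Let $H$ be a CAT($-1$) space and let $\gamma_1,\gamma_2:[0,\infty)\to H$ be unit speed geodesic rays with $\gamma_1(\infty)=\gamma_2(\infty)=\zeta\in\partial H$. Set $d=d(\gamma_1(0),\gamma_2(0))$ and $\rho=\rho_\zeta(\gamma_1(0),\gamma_2(0))$. Then for all $s,t\geq 0$, $$d(\gamma_1(s),\gamma_2(t))\leq\cosh^{-1}\left(\frac{\cosh(d)-\cosh(\rho)}{e^{t+s}}+\cosh(\rho+s-t)\right).$$ Moreover, if $\rho=0$ and $d>0$, then for all $t\geq0$, $$d(\gamma_1(t),\gamma_2(t))\leq 2\sinh^{-1}\left(\sinh(d/2)e^{-t}\right)\leq\begin{cases} d-\frac{2}{d}\left(e^{-d}+d-1\right)t & 0\leq t\leq\frac d2,\\ 2\sinh\left(\frac d2\right)e^{-t} & t>\frac d2.\end{cases}$$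
   Context: $\partial H$ is the geodesic boundary of $H$. The Busemann function is $\rho_\zeta(p,q)=\lim_{z\to\zeta}(d(q,z)-d(p,z))$. *)

theory Defs
  imports "HOL-Analysis.Analysis"
begin

text \<open>The hyperbolic plane (model space of curvature -1), upper half-plane model.\<close>

definition H2dist :: "complex \<Rightarrow> complex \<Rightarrow> real" where
  "H2dist z w = arcosh (1 + (cmod (z - w))\<^sup>2 / (2 * Im z * Im w))"

definition geodesic_segment :: "(real \<Rightarrow> 'a::metric_space) \<Rightarrow> 'a \<Rightarrow> 'a \<Rightarrow> bool" where
  "geodesic_segment c x y \<longleftrightarrow> c 0 = x \<and> c (dist x y) = y \<and>
     (\<forall>s\<in>{0..dist x y}. \<forall>t\<in>{0..dist x y}. dist (c s) (c t) = \<bar>s - t\<bar>)"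

definition geodesic_space :: "'a::metric_space itself \<Rightarrow> bool" where
  "geodesic_space _ \<longleftrightarrow> (\<forall>x y::'a. \<exists>c. geodesic_segment c x y)"

text \<open>Pairs (point on the side c from x to y, its comparison point on the side from a to b of
  a comparison triangle in the hyperbolic plane).\<close>

definition comparison_pairs ::
  "(real \<Rightarrow> 'a::metric_space) \<Rightarrow> 'a \<Rightarrow> 'a \<Rightarrow> complex \<Rightarrow> complex \<Rightarrow> ('a \<times> complex) set" where
  "comparison_pairs c x y a b =
     {(c s, pb) | s pb. s \<in> {0..dist x y} \<and> Im pb > 0 \<and>
                        H2dist a pb = s \<and> H2dist pb b = dist x y - s}"

definition CAT_minus1 :: "'a::metric_space itself \<Rightarrow> bool" where
  "CAT_minus1 T \<longleftrightarrow> geodesic_space T \<and>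
     (\<forall>(x::'a) y z cxy cyz czx a b c.
        geodesic_segment cxy x y \<and> geodesic_segment cyz y z \<and> geodesic_segment czx z x \<and>
        Im a > 0 \<and> Im b > 0 \<and> Im c > 0 \<and>
        H2dist a b = dist x y \<and> H2dist b c = dist y z \<and> H2dist c a = dist z x \<longrightarrow>
        (let P = comparison_pairs cxy x y a b \<union> comparison_pairs cyz y z b c
                 \<union> comparison_pairs czx z x c a
         in \<forall>(p, pb)\<in>P. \<forall>(q, qb)\<in>P. dist p q \<le> H2dist pb qb))"

definition geodesic_ray :: "(real \<Rightarrow> 'a::metric_space) \<Rightarrow> bool" where
  "geodesic_ray g \<longleftrightarrow> (\<forall>s\<ge>0. \<forall>t\<ge>0. dist (g s) (g t) = \<bar>s - t\<bar>)"

text \<open>Two rays define the same point of the geodesic boundary iff they are asymptotic.\<close>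

definition same_endpoint :: "(real \<Rightarrow> 'a::metric_space) \<Rightarrow> (real \<Rightarrow> 'a) \<Rightarrow> bool" where
  "same_endpoint g1 g2 \<longleftrightarrow> (\<exists>B. \<forall>t\<ge>0. dist (g1 t) (g2 t) \<le> B)"

text \<open>Busemann function rho_zeta(p,q) = lim_{z -> zeta} (d(q,z) - d(p,z)), where zeta is the
  endpoint of the ray g; the limit is taken along the ray.\<close>

definition busemann :: "(real \<Rightarrow> 'a::metric_space) \<Rightarrow> 'a \<Rightarrow> 'a \<Rightarrow> real" where
  "busemann g p q = Lim at_top (\<lambda>t. dist q (g t) - dist p (g t))"

end

theory Submission
  imports Defs
begin


definition Pt :: "real \<Rightarrow> real \<Rightarrow> real \<Rightarrow> complex" where
  "Pt r u v = Complex (sinh r * v / (cosh r - sinh r * u)) (1 / (cosh r - sinh r * u))"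

lemma Pt_den_pos:
  fixes r u v :: real
  assumes "u\<^sup>2 + v\<^sup>2 = 1"
  shows "cosh r - sinh r * u > 0"
proof -
  have "u\<^sup>2 \<le> 1" using assms zero_le_power2[of v] by linarith
  hence "\<bar>u\<bar> \<le> 1" by (simp add: abs_square_le_1)
  have "\<bar>sinh r\<bar> < cosh r"
  proof -
    have "(sinh r)\<^sup>2 < (cosh r)\<^sup>2" using cosh_square_eq[of r] by simp
    hence "\<bar>sinh r\<bar>\<^sup>2 < (cosh r)\<^sup>2" by simp
    thus ?thesis using cosh_real_pos[of r] power2_less_imp_less by fastforce
  qed
  have "\<bar>sinh r * u\<bar> \<le> \<bar>sinh r\<bar>" using \<open>\<bar>u\<bar> \<le> 1\<close>
    by (simp add: abs_mult mult_left_le)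
  thus ?thesis using \<open>\<bar>sinh r\<bar> < cosh r\<close> by linarith
qed

lemma Pt_Im_pos: "u\<^sup>2 + v\<^sup>2 = 1 \<Longrightarrow> Im (Pt r u v) > 0"
  using Pt_den_pos[of u v r] by (simp add: Pt_def)

lemma aux_frac: "(P::real) > 0 \<Longrightarrow> 1 + N / P\<^sup>2 / (2 / P) = (2 * P + N) / (2 * P)"
  by (simp add: field_simps power2_eq_square)

lemma Pt_cosh:
  fixes r1 r2 u1 u2 v1 v2 :: real
  assumes h1: "u1\<^sup>2 + v1\<^sup>2 = 1" and h2: "u2\<^sup>2 + v2\<^sup>2 = 1"
  shows "1 + (cmod (Pt r1 u1 v1 - Pt r2 u2 v2))\<^sup>2 / (2 * Im (Pt r1 u1 v1) * Im (Pt r2 u2 v2))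
     = cosh r1 * cosh r2 - sinh r1 * sinh r2 * (u1 * u2 + v1 * v2)"
proof -
  define c1 s1 c2 s2 where "c1 = cosh r1" "s1 = sinh r1" "c2 = cosh r2" "s2 = sinh r2"
  define D1 D2 where "D1 = c1 - s1 * u1" "D2 = c2 - s2 * u2"
  have D1: "D1 > 0" using Pt_den_pos[OF h1, of r1] by (simp add: D1_D2_def c1_s1_c2_s2_def)
  have D2: "D2 > 0" using Pt_den_pos[OF h2, of r2] by (simp add: D1_D2_def c1_s1_c2_s2_def)
  have e1: "c1\<^sup>2 = s1\<^sup>2 + 1" "c2\<^sup>2 = s2\<^sup>2 + 1" by (simp_all add: c1_s1_c2_s2_def cosh_square_eq)
  have key: "2 * (D1 * D2) + ((s1 * v1 * D2 - s2 * v2 * D1)\<^sup>2 + (D2 - D1)\<^sup>2)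
      = 2 * (D1 * D2) * (c1 * c2 - s1 * s2 * (u1 * u2 + v1 * v2))"
    unfolding D1_D2_def using e1 h1 h2 by algebra
  have cm: "(cmod (Pt r1 u1 v1 - Pt r2 u2 v2))\<^sup>2
      = (s1 * v1 / D1 - s2 * v2 / D2)\<^sup>2 + (1 / D1 - 1 / D2)\<^sup>2"
    by (simp add: Pt_def cmod_power2 D1_D2_def c1_s1_c2_s2_def)
  have n1: "s1 * v1 / D1 - s2 * v2 / D2 = (s1 * v1 * D2 - s2 * v2 * D1) / (D1 * D2)"
    using D1 D2 by (simp add: field_simps)
  have n2: "1 / D1 - 1 / D2 = (D2 - D1) / (D1 * D2)"
    using D1 D2 by (simp add: field_simps)
  have im: "2 * Im (Pt r1 u1 v1) * Im (Pt r2 u2 v2) = 2 / (D1 * D2)"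
    by (simp add: Pt_def D1_D2_def c1_s1_c2_s2_def)
  have "1 + (cmod (Pt r1 u1 v1 - Pt r2 u2 v2))\<^sup>2 / (2 * Im (Pt r1 u1 v1) * Im (Pt r2 u2 v2))
      = 1 + ((s1 * v1 * D2 - s2 * v2 * D1)\<^sup>2 + (D2 - D1)\<^sup>2) / (D1 * D2)\<^sup>2 / (2 / (D1 * D2))"
    unfolding cm im n1 n2 by (simp add: power_divide add_divide_distrib)
  also have "\<dots> = (2 * (D1 * D2) + ((s1 * v1 * D2 - s2 * v2 * D1)\<^sup>2 + (D2 - D1)\<^sup>2)) / (2 * (D1 * D2))"
    by (rule aux_frac) (use D1 D2 in simp)
  also have "\<dots> = c1 * c2 - s1 * s2 * (u1 * u2 + v1 * v2)"
    unfolding key using D1 D2 by simp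
  finally show ?thesis by (simp add: c1_s1_c2_s2_def)
qed

lemma H2dist_Pt:
  assumes "u1\<^sup>2 + v1\<^sup>2 = 1" "u2\<^sup>2 + v2\<^sup>2 = 1"
  shows "H2dist (Pt r1 u1 v1) (Pt r2 u2 v2)
     = arcosh (cosh r1 * cosh r2 - sinh r1 * sinh r2 * (u1 * u2 + v1 * v2))"
  unfolding H2dist_def using Pt_cosh[OF assms] by simp



lemma geodesic_segment_rev:
  assumes "geodesic_segment c y x"
  shows "geodesic_segment (\<lambda>s. c (dist y x - s)) x y"
  using assms unfolding geodesic_segment_def
  by (auto simp: dist_commute abs_minus_commute)

lemma cosh_le_arcosh:
  fixes D X :: real
  assumes "0 \<le> D" "D \<le> arcosh X" "1 \<le> X"
  shows "cosh D \<le> X"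
proof -
  have "cosh D \<le> cosh (arcosh X)"
    using assms by (subst cosh_real_nonneg_le_iff) auto
  thus ?thesis using assms by simp
qed

lemma cosh_abs_real: "cosh \<bar>x::real\<bar> = cosh x"
  by (cases "x \<ge> 0") auto

lemma CL:
  fixes c1 c2 :: "real \<Rightarrow> 'a::metric_space"
  assumes cat: "CAT_minus1 TYPE('a)"
    and g1: "geodesic_segment c1 y x" and g2: "geodesic_segment c2 y z"
    and Apos: "dist y x > 0" and Bpos: "dist y z > 0"
    and r1: "0 \<le> r1" "r1 \<le> dist y x" and r2: "0 \<le> r2" "r2 \<le> dist y z"
  shows "cosh (dist (c1 r1) (c2 r2)) \<le> cosh (r1 - r2) + sinh r1 * sinh r2 *
           (cosh (dist x z) - cosh (dist y x - dist y z)) / (sinh (dist y x) * sinh (dist y z))"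
proof -
  define A B C where "A = dist y x" "B = dist y z" "C = dist x z"
  have sA: "sinh A > 0" "sinh B > 0" using Apos Bpos by (simp_all add: A_B_C_def)
  obtain czx where gzx: "geodesic_segment czx z x"
    using cat unfolding CAT_minus1_def geodesic_space_def by blast
  define cxy where "cxy = (\<lambda>s. c1 (A - s))"
  have gxy: "geodesic_segment cxy x y"
    unfolding cxy_def A_B_C_def by (rule geodesic_segment_rev[OF g1])
  define u where "u = (cosh A * cosh B - cosh C) / (sinh A * sinh B)"
  define v where "v = sqrt (1 - u\<^sup>2)"
  have tri1: "\<bar>A - B\<bar> \<le> C" unfolding A_B_C_def
    using dist_triangle[of y x z] dist_triangle[of y z x] by (auto simp: dist_commute)
  have tri2: "C \<le> A + B" unfolding A_B_C_def
    using dist_triangle[of x z y] by (auto simp: dist_commute)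
  have C0: "0 \<le> C" by (simp add: A_B_C_def)
  have "cosh (A - B) \<le> cosh C"
    using tri1 C0 cosh_real_nonneg_le_iff[of "\<bar>A - B\<bar>" C] by (simp add: cosh_abs_real)
  hence u1: "u \<le> 1" using sA unfolding u_def by (simp add: divide_le_eq cosh_diff)
  have "cosh C \<le> cosh (A + B)"
    using tri2 C0 Apos Bpos cosh_real_nonneg_le_iff[of C "A + B"] by (simp add: A_B_C_def)
  hence u2: "-1 \<le> u" using sA unfolding u_def by (simp add: le_divide_eq cosh_add)
  have uv: "u\<^sup>2 + v\<^sup>2 = 1"
  proof -
    have "u\<^sup>2 \<le> 1" using u1 u2 by (simp add: abs_square_le_1)
    thus ?thesis unfolding v_def by simp
  qed
  have uv0: "(1::real)\<^sup>2 + 0\<^sup>2 = 1" by simp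
  define a b c where "a = Pt A 1 0" "b = Pt 0 1 0" "c = Pt B u v"
  have Ims: "Im a > 0" "Im b > 0" "Im c > 0"
    unfolding a_b_c_def using Pt_Im_pos[OF uv0] Pt_Im_pos[OF uv] by auto
  have A0: "A \<ge> 0" "B \<ge> 0" by (simp_all add: A_B_C_def)
  have hab: "H2dist a b = dist x y"
    unfolding a_b_c_def H2dist_Pt[OF uv0 uv0] using A0 by (simp add: arcosh_cosh_real A_B_C_def dist_commute)
  have hbc: "H2dist b c = dist y z"
    unfolding a_b_c_def H2dist_Pt[OF uv0 uv] using A0 by (simp add: arcosh_cosh_real A_B_C_def)
  have "cosh B * cosh A - sinh B * sinh A * (u * 1 + v * 0) = cosh C"
    using sA unfolding u_def by (simp add: field_simps)
  hence hca: "H2dist c a = dist z x"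
    unfolding a_b_c_def H2dist_Pt[OF uv uv0] using C0 by (simp add: arcosh_cosh_real A_B_C_def dist_commute)
  define P where "P = comparison_pairs cxy x y a b \<union> comparison_pairs c2 y z b c
                 \<union> comparison_pairs czx z x c a"
  have catP: "\<forall>(p, pb)\<in>P. \<forall>(q, qb)\<in>P. dist p q \<le> H2dist pb qb"
    using cat unfolding CAT_minus1_def P_def Let_def
    using gxy g2 gzx Ims hab hbc hca by blast
  define pb1 pb2 where "pb1 = Pt r1 1 0" "pb2 = Pt r2 u v"
  have m1: "(c1 r1, pb1) \<in> P"
  proof -
    have "H2dist a pb1 = A - r1"
      unfolding a_b_c_def pb1_pb2_def H2dist_Pt[OF uv0 uv0] using r1
      by (simp add: cosh_diff[symmetric] arcosh_cosh_real A_B_C_def)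
    moreover have "H2dist pb1 b = dist x y - (A - r1)"
      unfolding a_b_c_def pb1_pb2_def H2dist_Pt[OF uv0 uv0] using r1
      by (simp add: arcosh_cosh_real A_B_C_def dist_commute)
    moreover have "cxy (A - r1) = c1 r1" by (simp add: cxy_def)
    moreover have "Im pb1 > 0" unfolding pb1_pb2_def using Pt_Im_pos[OF uv0] by auto
    ultimately have "(c1 r1, pb1) \<in> comparison_pairs cxy x y a b"
      unfolding comparison_pairs_def using r1
      by (auto simp: A_B_C_def dist_commute intro!: exI[of _ "A - r1"])
    thus ?thesis by (simp add: P_def)
  qed
  have m2: "(c2 r2, pb2) \<in> P"
  proof -
    have "H2dist b pb2 = r2"
      unfolding a_b_c_def pb1_pb2_def H2dist_Pt[OF uv0 uv] using r2
      by (simp add: arcosh_cosh_real)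
    moreover have "H2dist pb2 c = dist y z - r2"
    proof -
      have "cosh r2 * cosh B - sinh r2 * sinh B * (u * u + v * v) = cosh (B - r2)"
        using uv by (simp add: cosh_diff power2_eq_square)
      thus ?thesis
        unfolding a_b_c_def pb1_pb2_def H2dist_Pt[OF uv uv] using r2
        by (simp add: arcosh_cosh_real A_B_C_def)
    qed
    moreover have "Im pb2 > 0" unfolding pb1_pb2_def using Pt_Im_pos[OF uv] by auto
    ultimately have "(c2 r2, pb2) \<in> comparison_pairs c2 y z b c"
      unfolding comparison_pairs_def using r2 by auto
    thus ?thesis by (simp add: P_def)
  qed
  have le: "dist (c1 r1) (c2 r2) \<le> H2dist pb1 pb2"
    using catP m1 m2 by fastforce
  define X where "X = cosh r1 * cosh r2 - sinh r1 * sinh r2 * u"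
  have H: "H2dist pb1 pb2 = arcosh X"
    unfolding pb1_pb2_def H2dist_Pt[OF uv0 uv] X_def by simp
  have X_eq: "X = cosh (r1 - r2) + sinh r1 * sinh r2 * (1 - u)"
    unfolding X_def by (simp add: cosh_diff algebra_simps)
  have "sinh r1 * sinh r2 * (1 - u) \<ge> 0"
    using r1 r2 u1 by simp
  moreover have "cosh (r1 - r2) \<ge> 1" by (rule cosh_real_ge_1)
  ultimately have X1: "X \<ge> 1" unfolding X_eq by linarith
  have "cosh (dist (c1 r1) (c2 r2)) \<le> X"
    using cosh_le_arcosh[OF zero_le_dist _ X1] le H by simp
  also have "X = cosh (r1 - r2) + sinh r1 * sinh r2 *
           (cosh C - cosh (A - B)) / (sinh A * sinh B)"
  proof -
    have "1 - u = (cosh C - cosh (A - B)) / (sinh A * sinh B)"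
      using sA unfolding u_def by (simp add: field_simps cosh_diff)
    thus ?thesis unfolding X_eq by simp
  qed
  finally show ?thesis by (simp add: A_B_C_def)
qed



lemma ray_dist0: "geodesic_ray g \<Longrightarrow> T \<ge> 0 \<Longrightarrow> dist (g 0) (g T) = T"
proof -
  assume a: "geodesic_ray g" "T \<ge> 0"
  hence "dist (g 0) (g T) = \<bar>0 - T\<bar>" unfolding geodesic_ray_def by simp
  thus ?thesis using a by simp
qed

lemma ray_seg: "geodesic_ray g \<Longrightarrow> T \<ge> 0 \<Longrightarrow> geodesic_segment g (g 0) (g T)"
  unfolding geodesic_segment_def using ray_dist0[of g T] unfolding geodesic_ray_def by auto

lemma busemann_tendsto:
  fixes g :: "real \<Rightarrow> 'a::metric_space"
  assumes g: "geodesic_ray g"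
  shows "((\<lambda>T. dist x (g T) - dist (g 0) (g T)) \<longlongrightarrow> busemann g (g 0) x) at_top"
proof -
  define f where "f = (\<lambda>T. dist x (g T) - dist (g 0) (g T))"
  have fT: "f T = dist x (g T) - T" if "T \<ge> 0" for T
    using ray_dist0[OF g that] by (simp add: f_def)
  have lb: "f T \<ge> - dist x (g 0)" if "T \<ge> 0" for T
    using fT[OF that] dist_triangle[of "g 0" "g T" x] ray_dist0[OF g that]
    by (simp add: dist_commute)
  have mono: "f T' \<le> f T" if "0 \<le> T" "T \<le> T'" for T T'
  proof -
    have "dist (g T) (g T') = T' - T" using g that unfolding geodesic_ray_def by auto
    thus ?thesis using fT that dist_triangle[of x "g T'" "g T"] by auto
  qed
  define l where "l = Inf (f ` {0..})"
  have bdd: "bdd_below (f ` {0..})" using lb by (auto intro!: bdd_belowI[of _ "- dist x (g 0)"])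
  have l_le: "l \<le> f T" if "T \<ge> 0" for T
    unfolding l_def using bdd that by (auto intro!: cInf_lower)
  have lim: "(f \<longlongrightarrow> l) at_top"
  proof (rule decreasing_tendsto)
    show "eventually (\<lambda>n. l \<le> f n) at_top"
      using l_le by (auto simp: eventually_at_top_linorder intro!: exI[of _ 0])
  next
    fix y assume "l < y"
    then obtain T where T: "T \<in> {0..}" "f T < y"
      unfolding l_def by (subst (asm) cInf_less_iff) (use bdd in auto)
    thus "eventually (\<lambda>n. f n < y) at_top"
      unfolding eventually_at_top_linorder
    proof (intro exI[of _ T] allI impI)
      fix n assume "T \<le> n"
      thus "f n < y" using mono[of T n] T by auto
    qed
  qed
  hence "busemann g (g 0) x = l"
    unfolding busemann_def f_def by (intro tendsto_Lim) auto
  thus ?thesis using lim by (simp add: f_def)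
qed



lemma exp_neg_at_top: "((\<lambda>x::real. exp (- x)) \<longlongrightarrow> 0) at_top"
  using filterlim_compose[OF exp_at_bot filterlim_uminus_at_bot_at_top] by (simp add: o_def)

lemma sinh_ratio_lim: "((\<lambda>x::real. sinh (x - c) / sinh x) \<longlongrightarrow> exp (- c)) at_top"
proof -
  have e: "sinh (x - c) / sinh x = (exp (- c) - exp c * (exp (- x) * exp (- x))) / (1 - exp (- x) * exp (- x))"
    if "x > 0" for x :: real
  proof -
    have s1: "sinh (x - c) = exp x * (exp (- c) - exp c * (exp (- x) * exp (- x))) / 2"
      by (simp add: sinh_field_def exp_diff exp_minus field_simps)
    have s2: "sinh x = exp x * (1 - exp (- x) * exp (- x)) / 2"
      by (simp add: sinh_field_def exp_minus field_simps)
    have "exp x > 0" by simp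
    thus ?thesis unfolding s1 s2 by simp
  qed
  have "((\<lambda>x. (exp (- c) - exp c * (exp (- x) * exp (- x))) / (1 - exp (- x) * exp (- x))) \<longlongrightarrow>
         (exp (- c) - exp c * (0 * 0)) / (1 - 0 * 0)) at_top"
    by (intro tendsto_intros exp_neg_at_top) auto
  hence "((\<lambda>x. (exp (- c) - exp c * (exp (- x) * exp (- x))) / (1 - exp (- x) * exp (- x))) \<longlongrightarrow>
         exp (- c)) at_top" by simp
  thus ?thesis
    by (rule Lim_transform_eventually)
       (auto simp: eventually_at_top_dense e intro!: exI[of _ 0])
qed

lemma arcosh_mono_real: "1 \<le> (x::real) \<Longrightarrow> x \<le> y \<Longrightarrow> arcosh x \<le> arcosh y"
  using arcosh_less_iff_real[of y x] by (simp add: not_less[symmetric])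

lemma dist_le_arcosh: "cosh (dist a b) \<le> X \<Longrightarrow> dist a b \<le> arcosh X"
  using arcosh_mono_real[OF cosh_real_ge_1[of "dist a b"], of X]
  by (simp add: arcosh_cosh_real)

lemma main_ineq:
  fixes g1 g2 :: "real \<Rightarrow> 'a::metric_space"
  assumes cat: "CAT_minus1 TYPE('a)" and r1: "geodesic_ray g1" and r2: "geodesic_ray g2"
    and se: "same_endpoint g1 g2" and s0: "s \<ge> 0" and t0: "t \<ge> 0"
  shows "dist (g1 s) (g2 t) \<le> arcosh ((cosh (dist (g1 0) (g2 0)) - cosh (busemann g1 (g1 0) (g2 0)))
            / exp (t + s) + cosh (busemann g1 (g1 0) (g2 0) + s - t))"
proof -
  define p q where "p = g1 0" "q = g2 0"
  define d where "d = dist p q"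
  define \<rho> where "\<rho> = busemann g1 p q"
  have d0: "d \<ge> 0" by (simp add: d_def)
  obtain M where M: "\<And>T. T \<ge> 0 \<Longrightarrow> dist (g1 T) (g2 T) \<le> M"
    using se unfolding same_endpoint_def by blast
  have "\<forall>U. \<exists>c. geodesic_segment c q (g1 U)"
    using cat unfolding CAT_minus1_def geodesic_space_def by blast
  then obtain \<sigma> where \<sigma>: "\<And>U. geodesic_segment (\<sigma> U) q (g1 U)" by metis
  define L where "L = (\<lambda>U. dist q (g1 U))"
  have LB: "((\<lambda>U. L U - dist p (g1 U)) \<longlongrightarrow> \<rho>) at_top"
    using busemann_tendsto[OF r1, of q] by (simp add: L_def \<rho>_def p_q_def)
  have dU: "dist p (g1 U) = U" if "U \<ge> 0" for U
    using ray_dist0[OF r1 that] by (simp add: p_q_def)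
  have dU2: "dist q (g2 U) = U" if "U \<ge> 0" for U
    using ray_dist0[OF r2 that] by (simp add: p_q_def)
  define \<rho>U where "\<rho>U = (\<lambda>U. L U - U)"
  have \<rho>lim: "(\<rho>U \<longlongrightarrow> \<rho>) at_top"
    using LB by (rule Lim_transform_eventually)
      (auto simp: eventually_at_top_linorder \<rho>U_def dU intro!: exI[of _ 0])
  have Lge: "L U \<ge> U - d" if "U \<ge> 0" for U
    using dist_triangle[of p "g1 U" q] dU[OF that] by (simp add: L_def d_def)
  have Lat: "filterlim L at_top at_top"
  proof (rule filterlim_at_top_mono)
    show "LIM x at_top. - d + x :> at_top"
      by (rule filterlim_tendsto_add_at_top[OF tendsto_const filterlim_ident])
    show "\<forall>\<^sub>F x in at_top. - d + x \<le> L x"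
      using Lge by (auto simp: eventually_at_top_linorder intro!: exI[of _ 0])
  qed
  define N where "N = max s t + d + 2"
  have NU: "U > 0" "U \<ge> s" "U \<ge> t" "L U \<ge> t" "L U > 0" if "U \<ge> N" for U
  proof -
    have U0: "U \<ge> 0" using that d0 s0 t0 unfolding N_def by auto
    show "U > 0" "U \<ge> s" "U \<ge> t" "L U \<ge> t" "L U > 0"
      using that Lge[OF U0] d0 s0 t0 unfolding N_def by auto
  qed
  define E where "E = (\<lambda>U. cosh ((U - s) - (L U - t)) + sinh (U - s) * sinh (L U - t) *
      (cosh d - cosh (U - L U)) / (sinh U * sinh (L U)))"
  define F where "F = (\<lambda>U. cosh (t - t) + sinh t * sinh t *
      (cosh (dist (g1 U) (g2 U)) - cosh (L U - U)) / (sinh (L U) * sinh U))"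
  have Ebound: "cosh (dist (g1 s) (\<sigma> U t)) \<le> E U" if U: "U \<ge> N" for U
  proof -
    note nu = NU[OF U]
    have ga: "geodesic_segment (\<lambda>r. g1 (dist (g1 0) (g1 U) - r)) (g1 U) (g1 0)"
      by (rule geodesic_segment_rev[OF ray_seg[OF r1]]) (use nu in auto)
    have gb: "geodesic_segment (\<lambda>r. \<sigma> U (dist q (g1 U) - r)) (g1 U) q"
      by (rule geodesic_segment_rev[OF \<sigma>])
    have e1: "dist (g1 U) (g1 0) = U" "dist (g1 0) (g1 U) = U"
      using dU[of U] nu by (simp_all add: p_q_def dist_commute)
    have e2: "dist (g1 U) q = L U" "dist q (g1 U) = L U"
      by (simp_all add: L_def dist_commute)
    have e3: "dist (g1 0) q = d" by (simp add: d_def p_q_def)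
    have "cosh (dist ((\<lambda>r. g1 (dist (g1 0) (g1 U) - r)) (U - s)) ((\<lambda>r. \<sigma> U (dist q (g1 U) - r)) (L U - t)))
      \<le> cosh ((U - s) - (L U - t)) + sinh (U - s) * sinh (L U - t) *
           (cosh (dist (g1 0) q) - cosh (dist (g1 U) (g1 0) - dist (g1 U) q)) /
           (sinh (dist (g1 U) (g1 0)) * sinh (dist (g1 U) q))"
      by (rule CL[OF cat ga gb]) (use nu s0 t0 e1 e2 in auto)
    thus ?thesis unfolding e1 e2 e3 E_def by simp
  qed
  have Fbound: "cosh (dist (\<sigma> U t) (g2 t)) \<le> F U" if U: "U \<ge> N" for U
  proof -
    note nu = NU[OF U]
    have gb: "geodesic_segment g2 q (g2 U)"
      unfolding p_q_def by (rule ray_seg[OF r2]) (use nu in auto)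
    have "cosh (dist (\<sigma> U t) (g2 t)) \<le> cosh (t - t) + sinh t * sinh t *
           (cosh (dist (g1 U) (g2 U)) - cosh (dist q (g1 U) - dist q (g2 U))) /
           (sinh (dist q (g1 U)) * sinh (dist q (g2 U)))"
      by (rule CL[OF cat \<sigma> gb]) (use nu t0 dU2[of U] in \<open>auto simp: L_def\<close>)
    thus ?thesis unfolding F_def using dU2[of U] nu by (simp add: L_def)
  qed
  have sr1: "((\<lambda>U. sinh (U - s) / sinh U) \<longlongrightarrow> exp (- s)) at_top"
    by (rule sinh_ratio_lim)
  have sr2: "((\<lambda>U. sinh (L U - t) / sinh (L U)) \<longlongrightarrow> exp (- t)) at_top"
    using filterlim_compose[OF sinh_ratio_lim[of t] Lat] by (simp add: o_def)
  have E_eq: "eventually (\<lambda>U. cosh ((t - s) - \<rho>U U) + (sinh (U - s) / sinh U) * (sinh (L U - t) / sinh (L U))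
      * (cosh d - cosh (\<rho>U U)) = E U) at_top"
  proof -
    have "cosh ((t - s) - \<rho>U U) + (sinh (U - s) / sinh U) * (sinh (L U - t) / sinh (L U))
      * (cosh d - cosh (\<rho>U U)) = E U" for U
    proof -
      have a1: "(t - s) - \<rho>U U = (U - s) - (L U - t)" by (simp add: \<rho>U_def)
      have a2: "cosh (\<rho>U U) = cosh (U - L U)"
        using cosh_minus[of "U - L U"] by (simp add: \<rho>U_def)
      show ?thesis unfolding E_def a1 a2 by (simp add: times_divide_times_eq)
    qed
    thus ?thesis by simp
  qed
  define Einf where "Einf = cosh ((t - s) - \<rho>) + exp (- s) * exp (- t) * (cosh d - cosh \<rho>)"
  have Elim: "(E \<longlongrightarrow> Einf) at_top"
  proof -
    have "((\<lambda>U. cosh ((t - s) - \<rho>U U) + (sinh (U - s) / sinh U) * (sinh (L U - t) / sinh (L U))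
      * (cosh d - cosh (\<rho>U U))) \<longlongrightarrow> Einf) at_top"
      unfolding Einf_def by (intro tendsto_intros \<rho>lim sr1 sr2)
    thus ?thesis using E_eq by (rule Lim_transform_eventually)
  qed
  have E1: "eventually (\<lambda>U. E U \<ge> 1) at_top"
    unfolding eventually_at_top_linorder
    by (intro exI[of _ N] allI impI order_trans[OF cosh_real_ge_1 Ebound])
  have Einf1: "Einf \<ge> 1"
    by (rule tendsto_lowerbound[OF Elim E1]) simp
  define G where "G = (\<lambda>U. sinh t * sinh t *
      (cosh (dist (g1 U) (g2 U)) - cosh (L U - U)) / (sinh (L U) * sinh U))"
  have FG: "F U = 1 + G U" for U by (simp add: F_def G_def)
  define H where "H = (\<lambda>U. sinh t * sinh t * cosh M / (sinh (L U) * sinh U))"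
  have GH: "0 \<le> G U \<and> G U \<le> H U" if U: "U \<ge> N" for U
  proof -
    note nu = NU[OF U]
    define c where "c = dist (g1 U) (g2 U)"
    have c0: "0 \<le> c" "c \<le> M" using M[of U] nu by (auto simp: c_def)
    have "L U \<le> U + c"
      using dist_triangle[of q "g1 U" "g2 U"] dU2[of U] nu by (simp add: L_def c_def dist_commute)
    moreover have "U \<le> L U + c"
      using dist_triangle[of q "g2 U" "g1 U"] dU2[of U] nu by (simp add: L_def c_def)
    ultimately have "\<bar>L U - U\<bar> \<le> c" by auto
    hence num0: "cosh (L U - U) \<le> cosh c"
      using cosh_real_nonneg_le_iff[of "\<bar>L U - U\<bar>" c] c0 by (simp add: cosh_abs_real)
    have num1: "cosh c - cosh (L U - U) \<le> cosh M"
    proof -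
      have "cosh c \<le> cosh M" using cosh_real_nonneg_le_iff[of c M] c0 by auto
      moreover have "cosh (L U - U) > 0" by (rule cosh_real_pos)
      ultimately show ?thesis by linarith
    qed
    have den: "sinh (L U) * sinh U > 0" using nu by simp
    have st: "sinh t * sinh t \<ge> 0" by simp
    have "0 \<le> G U" unfolding G_def c_def[symmetric] using num0 den st t0
      by (intro divide_nonneg_pos mult_nonneg_nonneg) auto
    moreover have "G U \<le> H U" unfolding G_def H_def c_def[symmetric]
      using num1 den st t0 by (intro divide_right_mono mult_left_mono) auto
    ultimately show ?thesis by simp
  qed
  have Hlim: "(H \<longlongrightarrow> 0) at_top"
  proof -
    have "filterlim (\<lambda>U. sinh (L U) * sinh U) at_top at_top"
      by (rule filterlim_at_top_mult_at_top[OF filterlim_compose[OF sinh_real_at_top Lat] sinh_real_at_top])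
    hence "filterlim (\<lambda>U. sinh (L U) * sinh U) at_infinity at_top"
      by (rule filterlim_at_top_imp_at_infinity)
    thus ?thesis unfolding H_def by (rule tendsto_divide_0[OF tendsto_const])
  qed
  have Glim: "(G \<longlongrightarrow> 0) at_top"
    by (rule tendsto_sandwich[OF _ _ tendsto_const Hlim])
       (use GH in \<open>auto simp: eventually_at_top_linorder intro!: exI[of _ N]\<close>)
  have Flim: "(F \<longlongrightarrow> 1) at_top"
    unfolding FG using tendsto_add[OF tendsto_const Glim, of 1] by simp
  have F1: "eventually (\<lambda>U. F U \<ge> 1) at_top"
    unfolding eventually_at_top_linorder
    by (intro exI[of _ N] allI impI order_trans[OF cosh_real_ge_1 Fbound])
  have alim: "((\<lambda>U. arcosh (E U)) \<longlongrightarrow> arcosh Einf) at_top"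
    by (rule tendsto_arcosh_strong[OF Elim Einf1 E1])
  have blim: "((\<lambda>U. arcosh (F U)) \<longlongrightarrow> arcosh 1) at_top"
    by (rule tendsto_arcosh_strong[OF Flim _ F1]) simp
  have bound: "eventually (\<lambda>U. dist (g1 s) (g2 t) \<le> arcosh (E U) + arcosh (F U)) at_top"
    unfolding eventually_at_top_linorder
  proof (intro exI[of _ N] allI impI)
    fix U assume U: "U \<ge> N"
    have "dist (g1 s) (g2 t) \<le> dist (g1 s) (\<sigma> U t) + dist (\<sigma> U t) (g2 t)"
      by (rule dist_triangle)
    also have "\<dots> \<le> arcosh (E U) + arcosh (F U)"
      using dist_le_arcosh[OF Ebound[OF U]] dist_le_arcosh[OF Fbound[OF U]] by simp
    finally show "dist (g1 s) (g2 t) \<le> arcosh (E U) + arcosh (F U)" .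
  qed
  have "dist (g1 s) (g2 t) \<le> arcosh Einf + arcosh 1"
    by (rule tendsto_le[OF _ tendsto_add[OF alim blim] tendsto_const bound]) simp
  also have "Einf = (cosh d - cosh \<rho>) / exp (t + s) + cosh (\<rho> + s - t)"
  proof -
    have "cosh ((t - s) - \<rho>) = cosh (\<rho> + s - t)"
      using cosh_minus[of "\<rho> + s - t"] by (simp add: algebra_simps)
    moreover have "exp (- s) * exp (- t) = 1 / exp (t + s)"
      by (simp add: exp_add exp_minus field_simps)
    ultimately show ?thesis unfolding Einf_def by simp
  qed
  finally show ?thesis by (simp add: d_def \<rho>_def p_q_def)
qed



lemma sinh_ge_self: "(y::real) \<ge> 0 \<Longrightarrow> y \<le> sinh y"
proof -
  assume y: "y \<ge> 0"
  have "(\<lambda>z. sinh z - z) 0 \<le> (\<lambda>z. sinh z - z) y"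
  proof (rule DERIV_nonneg_imp_nondecreasing[OF y])
    fix x :: real assume "0 \<le> x" "x \<le> y"
    have "DERIV (\<lambda>z. sinh z - z) x :> cosh x - 1"
      by (auto intro!: derivative_eq_intros)
    thus "\<exists>y. DERIV (\<lambda>z. sinh z - z) x :> y \<and> 0 \<le> y"
      using cosh_real_ge_1[of x] by auto
  qed
  thus ?thesis by simp
qed

lemma arsinh_le_self: "(x::real) \<ge> 0 \<Longrightarrow> arsinh x \<le> x"
proof -
  assume x: "x \<ge> 0"
  hence "arsinh x \<ge> 0" using arsinh_real_neg_iff[of x] by linarith
  thus ?thesis using sinh_ge_self[of "arsinh x"] by simp
qed

lemma phi_mono:
  fixes a b :: real
  assumes "0 \<le> b" "b \<le> a"
  shows "b / sqrt (b\<^sup>2 + 1) \<le> a / sqrt (a\<^sup>2 + 1)"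
proof -
  have "b\<^sup>2 \<le> a\<^sup>2" using assms by (simp add: power_mono)
  hence "b\<^sup>2 * (a\<^sup>2 + 1) \<le> a\<^sup>2 * (b\<^sup>2 + 1)" by (simp add: algebra_simps)
  hence "sqrt (b\<^sup>2 * (a\<^sup>2 + 1)) \<le> sqrt (a\<^sup>2 * (b\<^sup>2 + 1))" by simp
  hence "b * sqrt (a\<^sup>2 + 1) \<le> a * sqrt (b\<^sup>2 + 1)"
    using assms by (simp add: real_sqrt_mult)
  moreover have "sqrt (a\<^sup>2 + 1) > 0" "sqrt (b\<^sup>2 + 1) > 0"
    by (simp_all add: add_nonneg_pos)
  ultimately show ?thesis by (simp add: divide_simps mult.commute)
qed

lemma f_convex:
  fixes k :: real
  assumes k: "k > 0"
  shows "convex_on UNIV (\<lambda>t. 2 * arsinh (k * exp (- t)))"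
proof (rule convex_on_realI[where f' = "\<lambda>x. - 2 * (k * exp (- x) / sqrt ((k * exp (- x))\<^sup>2 + 1))"])
  show "connected (UNIV :: real set)" by simp
next
  fix x :: real
  show "((\<lambda>t. 2 * arsinh (k * exp (- t))) has_real_derivative
          - 2 * (k * exp (- x) / sqrt ((k * exp (- x))\<^sup>2 + 1))) (at x)"
  proof -
    have g: "((\<lambda>t. k * exp (- t)) has_real_derivative (- (k * exp (- x)))) (at x)"
      by (auto intro!: derivative_eq_intros)
    have "((\<lambda>t. arsinh (k * exp (- t))) has_real_derivative
           (1 / sqrt ((k * exp (- x))\<^sup>2 + 1)) * (- (k * exp (- x)))) (at x)"
      by (rule DERIV_chain2[OF arsinh_real_has_field_derivative g])
    from DERIV_cmult[OF this, of 2] show ?thesis by simp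
  qed
next
  fix x y :: real assume "x \<le> y"
  hence "k * exp (- y) \<le> k * exp (- x)" using k by simp
  hence "k * exp (- y) / sqrt ((k * exp (- y))\<^sup>2 + 1) \<le> k * exp (- x) / sqrt ((k * exp (- x))\<^sup>2 + 1)"
    using k by (intro phi_mono) auto
  thus "- 2 * (k * exp (- x) / sqrt ((k * exp (- x))\<^sup>2 + 1))
        \<le> - 2 * (k * exp (- y) / sqrt ((k * exp (- y))\<^sup>2 + 1))" by simp
qed

lemma arcosh_eq_arsinh:
  fixes d t :: real
  assumes d0: "d \<ge> 0"
  shows "arcosh ((cosh d - cosh 0) / exp (t + t) + cosh (0 + t - t))
       = 2 * arsinh (sinh (d / 2) * exp (- t))"
proof -
  define y where "y = arsinh (sinh (d / 2) * exp (- t))"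
  have cd: "cosh d - 1 = 2 * (sinh (d / 2))\<^sup>2"
    using cosh_double[of "d / 2"] cosh_square_eq[of "d / 2"] by simp
  have "cosh (2 * y) = 1 + 2 * (sinh y)\<^sup>2"
    using cosh_double[of y] cosh_square_eq[of y] by simp
  also have "sinh y = sinh (d / 2) * exp (- t)" by (simp add: y_def)
  also have "1 + 2 * (sinh (d / 2) * exp (- t))\<^sup>2 = (cosh d - cosh 0) / exp (t + t) + cosh (0 + t - t)"
  proof -
    have "exp (t + t) = exp t * exp t" by (rule exp_add)
    thus ?thesis using cd by (simp add: power_mult_distrib exp_minus field_simps power2_eq_square)
  qed
  finally have "arcosh ((cosh d - cosh 0) / exp (t + t) + cosh (0 + t - t)) = arcosh (cosh (2 * y))"
    by simp
  also have "\<dots> = \<bar>2 * y\<bar>"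
    using arcosh_cosh_real[of "\<bar>2 * y\<bar>"] by (simp add: cosh_abs_real)
  finally have fin: "arcosh ((cosh d - cosh 0) / exp (t + t) + cosh (0 + t - t)) = \<bar>2 * y\<bar>" .
  have y0: "y \<ge> 0"
  proof -
    have "sinh (d / 2) * exp (- t) \<ge> 0" using d0 by simp
    thus ?thesis unfolding y_def using arsinh_real_neg_iff[of "sinh (d / 2) * exp (- t)"] by linarith
  qed
  show ?thesis using fin y0 by (simp add: y_def)
qed

lemma piecewise_bound:
  fixes d t :: real
  assumes d: "d > 0" and t: "t \<ge> 0"
  shows "2 * arsinh (sinh (d / 2) * exp (- t))
     \<le> (if t \<le> d / 2 then d - 2 / d * (exp (- d) + d - 1) * t
        else 2 * sinh (d / 2) * exp (- t))"
proof (cases "t \<le> d / 2")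
  case False
  have "arsinh (sinh (d / 2) * exp (- t)) \<le> sinh (d / 2) * exp (- t)"
    using d by (intro arsinh_le_self) simp
  thus ?thesis using False by simp
next
  case True
  define k where "k = sinh (d / 2)"
  have k: "k > 0" using d by (simp add: k_def)
  define f where "f = (\<lambda>t. 2 * arsinh (k * exp (- t)))"
  define l where "l = 2 * t / d"
  have l: "0 \<le> l" "l \<le> 1" using d t True by (auto simp: l_def field_simps)
  have "f ((1 - l) *\<^sub>R 0 + l *\<^sub>R (d / 2)) \<le> (1 - l) * f 0 + l * f (d / 2)"
    using convex_onD[OF f_convex[OF k]] l unfolding f_def by blast
  moreover have "(1 - l) *\<^sub>R 0 + l *\<^sub>R (d / 2) = t" using d by (simp add: l_def)
  moreover have "f 0 = d" by (simp add: f_def k_def arsinh_sinh_real)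
  moreover have "f (d / 2) \<le> 1 - exp (- d)"
  proof -
    have "f (d / 2) \<le> 2 * (k * exp (- (d / 2)))"
      unfolding f_def using k by (simp add: arsinh_le_self)
    also have "\<dots> = 1 - exp (- d)"
    proof -
      have "exp (d / 2) * exp (- (d / 2)) = 1" by (simp add: exp_minus)
      moreover have "exp (- (d / 2)) * exp (- (d / 2)) = exp (- d)"
        by (simp add: exp_add[symmetric])
      ultimately show ?thesis unfolding k_def sinh_field_def by (simp add: algebra_simps add_divide_distrib diff_divide_distrib)
    qed
    finally show ?thesis .
  qed
  ultimately have "f t \<le> (1 - l) * d + l * (1 - exp (- d))"
    using l by (smt (verit) mult_left_mono)
  also have "\<dots> = d - 2 / d * (exp (- d) + d - 1) * t"
    using d by (simp add: l_def field_simps)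
  finally show ?thesis using True by (simp add: f_def k_def)
qed


theorem corollaryA2:
  fixes g1 g2 :: "real \<Rightarrow> 'a::metric_space"
  assumes "CAT_minus1 TYPE('a)"
    and "geodesic_ray g1" and "geodesic_ray g2"
    and "same_endpoint g1 g2"
  defines "d \<equiv> dist (g1 0) (g2 0)"
    and "\<rho> \<equiv> busemann g1 (g1 0) (g2 0)"
  shows "(\<forall>s\<ge>0. \<forall>t\<ge>0. dist (g1 s) (g2 t)
            \<le> arcosh ((cosh d - cosh \<rho>) / exp (t + s) + cosh (\<rho> + s - t)))
       \<and> (\<rho> = 0 \<and> d > 0 \<longrightarrow>
            (\<forall>t\<ge>0. dist (g1 t) (g2 t) \<le> 2 * arsinh (sinh (d / 2) * exp (- t))
               \<and> 2 * arsinh (sinh (d / 2) * exp (- t))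
                  \<le> (if t \<le> d / 2 then d - 2 / d * (exp (- d) + d - 1) * t
                     else 2 * sinh (d / 2) * exp (- t))))"
proof -
  have A: "\<forall>s\<ge>0. \<forall>t\<ge>0. dist (g1 s) (g2 t)
            \<le> arcosh ((cosh d - cosh \<rho>) / exp (t + s) + cosh (\<rho> + s - t))"
    using main_ineq[OF assms(1-4)] unfolding d_def \<rho>_def by blast
  have B: "\<rho> = 0 \<and> d > 0 \<longrightarrow>
            (\<forall>t\<ge>0. dist (g1 t) (g2 t) \<le> 2 * arsinh (sinh (d / 2) * exp (- t))
               \<and> 2 * arsinh (sinh (d / 2) * exp (- t))
                  \<le> (if t \<le> d / 2 then d - 2 / d * (exp (- d) + d - 1) * t
                     else 2 * sinh (d / 2) * exp (- t)))"
  proof (intro impI allI)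
    fix t :: real
    assume h: "\<rho> = 0 \<and> d > 0" and t: "t \<ge> 0"
    show "dist (g1 t) (g2 t) \<le> 2 * arsinh (sinh (d / 2) * exp (- t))
               \<and> 2 * arsinh (sinh (d / 2) * exp (- t))
                  \<le> (if t \<le> d / 2 then d - 2 / d * (exp (- d) + d - 1) * t
                     else 2 * sinh (d / 2) * exp (- t))"
    proof -
      have r0: "\<rho> = 0" using h by simp
      have X: "dist (g1 t) (g2 t) \<le> arcosh ((cosh d - cosh \<rho>) / exp (t + t) + cosh (\<rho> + t - t))"
        using A t by blast
      have "dist (g1 t) (g2 t) \<le> arcosh ((cosh d - cosh 0) / exp (t + t) + cosh (0 + t - t))"
        using X unfolding r0 .
      also have "\<dots> = 2 * arsinh (sinh (d / 2) * exp (- t))"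
        by (rule arcosh_eq_arsinh) (use h in simp)
      finally show "dist (g1 t) (g2 t) \<le> 2 * arsinh (sinh (d / 2) * exp (- t))
               \<and> 2 * arsinh (sinh (d / 2) * exp (- t))
                  \<le> (if t \<le> d / 2 then d - 2 / d * (exp (- d) + d - 1) * t
                     else 2 * sinh (d / 2) * exp (- t))"
        using piecewise_bound[of d t] h t by simp
    qed
  qed
  show ?thesis using A B by blast
qed

end
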